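(* Let $(X,\mathcal{M})$ be a measurable space, $\Sigma$ a compact Hausdorff group with Haar probability measure $\mu_\Sigma$, and $T:\Sigma\times X\to X$ a measurable group action. Let $n\in\mathbb{Z}^+$, $V\subset\mathcal{M}_b(X)^n$ a linear subspace equipped with the $M(X)$-topology, and $\Gamma\subset V$. If $\Gamma$ is convex and closed, $S_\Sigma[V]\subset V$, and $\Gamma$ is closed under $\Sigma$ (i.e. $\gamma\circ T_\sigma\in\Gamma$ for all $\gamma\in\Gamma$, $\sigma\in\Sigma$), then $S_\Sigma[\Gamma]\subset\Gamma$.
   Context: $S_\Sigma[\gamma](x)=\int_\Sigma\gamma(T_\sigma(x))\mu_\Sigma(d\sigma)$, applied componentwise. $M(X)$-topology: with $M(X)$ the finite signed measures on $X$, for $\nu\in M(X)^n$ let $\tau_\nu(\gamma)=\sum_{i=1}^n\int\gamma^i d\nu_i$; $V$ carries the weakest topology making all $\tau_\nu$ continuous (a locally convex topology with dual $\{\tau_\nu\}$). *)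

theory Defs
  imports "HOL-Probability.Probability"
begin

definition compact_hausdorff_group ::
  "'g topology \<Rightarrow> ('g \<Rightarrow> 'g \<Rightarrow> 'g) \<Rightarrow> 'g \<Rightarrow> ('g \<Rightarrow> 'g) \<Rightarrow> bool" where
  "compact_hausdorff_group tp mul e inver \<longleftrightarrow>
     (let S = topspace tp in
       (\<forall>x\<in>S. \<forall>y\<in>S. mul x y \<in> S) \<and> e \<in> S \<and> (\<forall>x\<in>S. inver x \<in> S) \<and>
       (\<forall>x\<in>S. \<forall>y\<in>S. \<forall>z\<in>S. mul (mul x y) z = mul x (mul y z)) \<and>
       (\<forall>x\<in>S. mul e x = x \<and> mul x e = x \<and> mul (inver x) x = e \<and> mul x (inver x) = e) \<and>
       continuous_map (prod_topology tp tp) tp (\<lambda>(x, y). mul x y) \<and>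
       continuous_map tp tp inver \<and>
       compact_space tp \<and> Hausdorff_space tp)"

definition haar_probability ::
  "'g topology \<Rightarrow> ('g \<Rightarrow> 'g \<Rightarrow> 'g) \<Rightarrow> 'g measure \<Rightarrow> bool" where
  "haar_probability tp mul \<mu> \<longleftrightarrow>
     prob_space \<mu> \<and> space \<mu> = topspace tp \<and>
     sets \<mu> = sigma_sets (topspace tp) {U. openin tp U} \<and>
     (\<forall>g\<in>topspace tp. \<forall>A\<in>sets \<mu>. emeasure \<mu> (mul g ` A) = emeasure \<mu> A) \<and>
     (\<forall>A\<in>sets \<mu>. emeasure \<mu> A = (INF U\<in>{U. openin tp U \<and> A \<subseteq> U}. emeasure \<mu> U)) \<and>
     (\<forall>U. openin tp U \<longrightarrow>
        emeasure \<mu> U = (SUP K\<in>{K. compactin tp K \<and> K \<subseteq> U}. emeasure \<mu> K))"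

definition measurable_group_action ::
  "'g topology \<Rightarrow> ('g \<Rightarrow> 'g \<Rightarrow> 'g) \<Rightarrow> 'g \<Rightarrow> 'g measure \<Rightarrow> 'a measure \<Rightarrow> ('g \<Rightarrow> 'a \<Rightarrow> 'a) \<Rightarrow> bool" where
  "measurable_group_action tp mul e \<mu> M T \<longleftrightarrow>
     (\<lambda>(\<sigma>, x). T \<sigma> x) \<in> measurable (\<mu> \<Otimes>\<^sub>M M) M \<and>
     (\<forall>x\<in>space M. T e x = x) \<and>
     (\<forall>g\<in>topspace tp. \<forall>h\<in>topspace tp. \<forall>x\<in>space M. T (mul g h) x = T g (T h x))"

definition Mb :: "'a measure \<Rightarrow> ('a \<Rightarrow> real ^ 'n) set" where
  "Mb M = {\<gamma>. \<gamma> \<in> borel_measurable M \<and> bounded (\<gamma> ` space M) \<and> (\<forall>x. x \<notin> space M \<longrightarrow> \<gamma> x = 0)}"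

definition lin_subspace :: "('a \<Rightarrow> real ^ 'n) set \<Rightarrow> bool" where
  "lin_subspace V \<longleftrightarrow> (\<lambda>x. 0) \<in> V \<and>
     (\<forall>\<gamma>\<in>V. \<forall>\<delta>\<in>V. (\<lambda>x. \<gamma> x + \<delta> x) \<in> V) \<and>
     (\<forall>\<gamma>\<in>V. \<forall>c::real. (\<lambda>x. c *\<^sub>R \<gamma> x) \<in> V)"

definition convex_fun_set :: "('a \<Rightarrow> real ^ 'n) set \<Rightarrow> bool" where
  "convex_fun_set \<Gamma> \<longleftrightarrow> (\<forall>\<gamma>\<in>\<Gamma>. \<forall>\<delta>\<in>\<Gamma>. \<forall>t::real. 0 \<le> t \<and> t \<le> 1 \<longrightarrow>
     (\<lambda>x. t *\<^sub>R \<gamma> x + (1 - t) *\<^sub>R \<delta> x) \<in> \<Gamma>)"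

text \<open>A finite signed measure on M, represented by its Jordan decomposition as a
  pair (\<nu>+, \<nu>-) of finite measures on M.\<close>
definition finite_signed :: "'a measure \<Rightarrow> 'a measure \<times> 'a measure \<Rightarrow> bool" where
  "finite_signed M \<nu> \<longleftrightarrow> finite_measure (fst \<nu>) \<and> finite_measure (snd \<nu>) \<and>
     sets (fst \<nu>) = sets M \<and> sets (snd \<nu>) = sets M"

definition tau :: "('n::finite \<Rightarrow> 'a measure \<times> 'a measure) \<Rightarrow> ('a \<Rightarrow> real ^ 'n) \<Rightarrow> real" where
  "tau \<nu> \<gamma> = (\<Sum>i\<in>UNIV. (\<integral>x. \<gamma> x $ i \<partial>fst (\<nu> i)) - (\<integral>x. \<gamma> x $ i \<partial>snd (\<nu> i)))"

definition MX_topology :: "'a measure \<Rightarrow> ('a \<Rightarrow> real ^ 'n::finite) set \<Rightarrow> ('a \<Rightarrow> real ^ 'n) topology" where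
  "MX_topology M V = topology_generated_by
     {{\<gamma>\<in>V. tau \<nu> \<gamma> \<in> U} | \<nu> U. (\<forall>i. finite_signed M (\<nu> i)) \<and> open U}"

definition S_op :: "'g measure \<Rightarrow> 'a measure \<Rightarrow> ('g \<Rightarrow> 'a \<Rightarrow> 'a) \<Rightarrow> ('a \<Rightarrow> real ^ 'n) \<Rightarrow> 'a \<Rightarrow> real ^ 'n" where
  "S_op \<mu> M T \<gamma> = (\<lambda>x. if x \<in> space M then (\<integral>\<sigma>. \<gamma> (T \<sigma> x) \<partial>\<mu>) else 0)"

definition compose_action :: "'a measure \<Rightarrow> ('g \<Rightarrow> 'a \<Rightarrow> 'a) \<Rightarrow> 'g \<Rightarrow> ('a \<Rightarrow> real ^ 'n) \<Rightarrow> 'a \<Rightarrow> real ^ 'n" where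
  "compose_action M T \<sigma> \<gamma> = (\<lambda>x. if x \<in> space M then \<gamma> (T \<sigma> x) else 0)"

end

theory Submission
  imports Defs
begin

lemma Mb_bound:
  assumes "\<gamma> \<in> Mb M"
  obtains B where "B \<ge> 0" "\<And>x. x \<in> space M \<Longrightarrow> norm (\<gamma> x) \<le> B"
proof -
  have "bounded (\<gamma> ` space M)" using assms by (simp add: Mb_def)
  then obtain B where "\<forall>y\<in>\<gamma> ` space M. norm y \<le> B" by (auto simp: bounded_iff)
  then show ?thesis using that[of "max B 0"] by fastforce
qed

lemma Mb_integrable:
  assumes "\<gamma> \<in> Mb M" "finite_measure N" "sets N = sets M"
  shows "integrable N (\<lambda>x. \<gamma> x $ i)"
proof -
  obtain B where B: "\<And>x. x \<in> space M \<Longrightarrow> norm (\<gamma> x) \<le> B" using Mb_bound[OF assms(1)] by blast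
  have sp: "space N = space M" using assms(3) by (rule sets_eq_imp_space_eq)
  have m: "\<gamma> \<in> borel_measurable N" using assms(1) by (subst measurable_cong_sets[OF assms(3) refl]) (simp add: Mb_def)
  show ?thesis
  proof (rule finite_measure.integrable_const_bound[OF assms(2)])
    show "AE x in N. norm (\<gamma> x $ i) \<le> B"
    proof (rule AE_I2)
      fix x assume "x \<in> space N"
      then have "norm (\<gamma> x) \<le> B" using B sp by blast
      then show "norm (\<gamma> x $ i) \<le> B" using Finite_Cartesian_Product.norm_nth_le[of "\<gamma> x" i] by linarith
    qed
    show "(\<lambda>x. \<gamma> x $ i) \<in> borel_measurable N" using measurable_compose[OF m borel_measurable_nth] by simp
  qed
qed

lemma int_abs_bound:
  assumes "finite_measure N" "f \<in> borel_measurable N" "\<And>x. x \<in> space N \<Longrightarrow> \<bar>f x\<bar> \<le> B"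
  shows "\<bar>integral\<^sup>L N f\<bar> \<le> B * measure N (space N)"
proof -
  have int: "integrable N f"
    using assms by (intro finite_measure.integrable_const_bound[OF assms(1), where B=B]) auto
  have "\<bar>integral\<^sup>L N f\<bar> \<le> integral\<^sup>L N (\<lambda>x. \<bar>f x\<bar>)"
    using integral_abs_bound by blast
  also have "\<dots> \<le> integral\<^sup>L N (\<lambda>x. B)"
    using assms int finite_measure.integrable_const[OF assms(1)] by (intro integral_mono) auto
  also have "\<dots> = B * measure N (space N)" by simp
  finally show ?thesis .
qed

lemma nbhd:
  fixes M :: "'a measure" and V :: "('a \<Rightarrow> real ^ 'n::finite) set"
  assumes "generate_topology_on {{\<gamma>\<in>V. tau \<nu> \<gamma> \<in> U} | \<nu> U. (\<forall>i. finite_signed M (\<nu> i)) \<and> open U} W"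
  shows "\<forall>x\<in>W. \<exists>F \<epsilon>. finite F \<and> (\<forall>\<nu>\<in>F. \<forall>i. finite_signed M (\<nu> i)) \<and> \<epsilon> > 0 \<and>
           (\<forall>f\<in>V. (\<forall>\<nu>\<in>F. \<bar>tau \<nu> f - tau \<nu> x\<bar> < \<epsilon>) \<longrightarrow> f \<in> W)"
  using assms
proof induction
  case Empty
  then show ?case by simp
next
  case (Int a b)
  show ?case
  proof
    fix x assume x: "x \<in> a \<inter> b"
    have xa: "x \<in> a" and xb: "x \<in> b" using x by auto
    obtain F1 e1 where "finite F1 \<and> (\<forall>\<nu>\<in>F1. \<forall>i. finite_signed M (\<nu> i)) \<and> e1 > 0 \<and>
           (\<forall>f\<in>V. (\<forall>\<nu>\<in>F1. \<bar>tau \<nu> f - tau \<nu> x\<bar> < e1) \<longrightarrow> f \<in> a)"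
      using bspec[OF Int.IH(1) xa] by (elim exE) (erule that)
    then have 1: "finite F1" "\<forall>\<nu>\<in>F1. \<forall>i. finite_signed M (\<nu> i)" "e1 > 0"
           "\<forall>f\<in>V. (\<forall>\<nu>\<in>F1. \<bar>tau \<nu> f - tau \<nu> x\<bar> < e1) \<longrightarrow> f \<in> a" by simp_all
    obtain F2 e2 where "finite F2 \<and> (\<forall>\<nu>\<in>F2. \<forall>i. finite_signed M (\<nu> i)) \<and> e2 > 0 \<and>
           (\<forall>f\<in>V. (\<forall>\<nu>\<in>F2. \<bar>tau \<nu> f - tau \<nu> x\<bar> < e2) \<longrightarrow> f \<in> b)"
      using bspec[OF Int.IH(2) xb] by (elim exE) (erule that)
    then have 2: "finite F2" "\<forall>\<nu>\<in>F2. \<forall>i. finite_signed M (\<nu> i)" "e2 > 0"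
           "\<forall>f\<in>V. (\<forall>\<nu>\<in>F2. \<bar>tau \<nu> f - tau \<nu> x\<bar> < e2) \<longrightarrow> f \<in> b" by simp_all
    have "\<forall>f\<in>V. (\<forall>\<nu>\<in>F1 \<union> F2. \<bar>tau \<nu> f - tau \<nu> x\<bar> < min e1 e2) \<longrightarrow> f \<in> a \<inter> b"
    proof (intro ballI impI)
      fix f assume f: "f \<in> V" "\<forall>\<nu>\<in>F1 \<union> F2. \<bar>tau \<nu> f - tau \<nu> x\<bar> < min e1 e2"
      then have "\<forall>\<nu>\<in>F1. \<bar>tau \<nu> f - tau \<nu> x\<bar> < e1" "\<forall>\<nu>\<in>F2. \<bar>tau \<nu> f - tau \<nu> x\<bar> < e2"
        by auto
      then show "f \<in> a \<inter> b" using 1(4) 2(4) f(1) by blast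
    qed
    moreover have "finite (F1 \<union> F2)" "\<forall>\<nu>\<in>F1 \<union> F2. \<forall>i. finite_signed M (\<nu> i)" "min e1 e2 > 0"
      using 1 2 by auto
    ultimately show "\<exists>F \<epsilon>. finite F \<and> (\<forall>\<nu>\<in>F. \<forall>i. finite_signed M (\<nu> i)) \<and> \<epsilon> > 0 \<and>
           (\<forall>f\<in>V. (\<forall>\<nu>\<in>F. \<bar>tau \<nu> f - tau \<nu> x\<bar> < \<epsilon>) \<longrightarrow> f \<in> a \<inter> b)"
      by blast
  qed
next
  case (UN K)
  show ?case
  proof
    fix x assume "x \<in> \<Union>K"
    then obtain k where "k \<in> K" "x \<in> k" by blast
    obtain F e where "finite F \<and> (\<forall>\<nu>\<in>F. \<forall>i. finite_signed M (\<nu> i)) \<and> e > 0 \<and>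
           (\<forall>f\<in>V. (\<forall>\<nu>\<in>F. \<bar>tau \<nu> f - tau \<nu> x\<bar> < e) \<longrightarrow> f \<in> k)"
      using bspec[OF UN.IH[OF \<open>k \<in> K\<close>] \<open>x \<in> k\<close>] by (elim exE) (erule that)
    then have 1: "finite F" "\<forall>\<nu>\<in>F. \<forall>i. finite_signed M (\<nu> i)" "e > 0"
           "\<forall>f\<in>V. (\<forall>\<nu>\<in>F. \<bar>tau \<nu> f - tau \<nu> x\<bar> < e) \<longrightarrow> f \<in> k" by simp_all
    have "\<forall>f\<in>V. (\<forall>\<nu>\<in>F. \<bar>tau \<nu> f - tau \<nu> x\<bar> < e) \<longrightarrow> f \<in> \<Union>K"
      using 1(4) \<open>k \<in> K\<close> by blast
    then show "\<exists>F \<epsilon>. finite F \<and> (\<forall>\<nu>\<in>F. \<forall>i. finite_signed M (\<nu> i)) \<and> \<epsilon> > 0 \<and>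
           (\<forall>f\<in>V. (\<forall>\<nu>\<in>F. \<bar>tau \<nu> f - tau \<nu> x\<bar> < \<epsilon>) \<longrightarrow> f \<in> \<Union>K)"
      using 1(1-3) by blast
  qed
next
  case (Basis s)
  then obtain \<nu> U where s: "s = {\<gamma>\<in>V. tau \<nu> \<gamma> \<in> U}" "\<forall>i. finite_signed M (\<nu> i)" "open U" by blast
  show ?case
  proof
    fix x assume "x \<in> s"
    then have "tau \<nu> x \<in> U" using s by auto
    then obtain e where e: "e > 0" "\<forall>y. dist y (tau \<nu> x) < e \<longrightarrow> y \<in> U"
      using s(3) open_dist by blast
    show "\<exists>F \<epsilon>. finite F \<and> (\<forall>\<nu>\<in>F. \<forall>i. finite_signed M (\<nu> i)) \<and> \<epsilon> > 0 \<and>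
           (\<forall>f\<in>V. (\<forall>\<nu>\<in>F. \<bar>tau \<nu> f - tau \<nu> x\<bar> < \<epsilon>) \<longrightarrow> f \<in> s)"
      apply (rule exI[of _ "{\<nu>}"], rule exI[of _ e])
      using e s by (auto simp: dist_real_def)
  qed
qed

lemma convex_comb:
  fixes \<Gamma> :: "('a \<Rightarrow> real ^ 'n) set"
  assumes cv: "convex_fun_set \<Gamma>"
  shows "finite R \<Longrightarrow> (\<forall>v\<in>R. c v \<ge> 0) \<Longrightarrow> sum c R = 1 \<Longrightarrow> (\<forall>v\<in>R. f v \<in> \<Gamma>) \<Longrightarrow>
     (\<lambda>x. \<Sum>v\<in>R. c v *\<^sub>R f v x) \<in> \<Gamma>"
proof (induction R arbitrary: c rule: finite_induct)
  case empty
  then show ?case by simp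
next
  case (insert a R)
  have sR: "sum c R = 1 - c a" using insert by simp
  have nn: "sum c R \<ge> 0" using insert by (simp add: sum_nonneg)
  show ?case
  proof (cases "c a = 1")
    case True
    then have "sum c R = 0" using sR by simp
    then have z: "\<forall>v\<in>R. c v = 0" using insert sum_nonneg_eq_0_iff by (metis insert_iff)
    have "(\<lambda>x. \<Sum>v\<in>insert a R. c v *\<^sub>R f v x) = f a"
      using insert True z by auto
    then show ?thesis using insert by simp
  next
    case False
    have ca: "c a \<le> 1" using sR nn by simp
    with False have pos: "1 - c a > 0" by simp
    define c' where "c' v = c v / (1 - c a)" for v
    have "(\<lambda>x. \<Sum>v\<in>R. c' v *\<^sub>R f v x) \<in> \<Gamma>"
    proof (rule insert.IH)
      show "\<forall>v\<in>R. 0 \<le> c' v" using insert pos by (simp add: c'_def)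
      show "sum c' R = 1" using sR pos by (simp add: c'_def flip: sum_divide_distrib)
      show "\<forall>v\<in>R. f v \<in> \<Gamma>" using insert by simp
    qed
    then have "(\<lambda>x. c a *\<^sub>R f a x + (1 - c a) *\<^sub>R (\<Sum>v\<in>R. c' v *\<^sub>R f v x)) \<in> \<Gamma>"
      using cv insert ca unfolding convex_fun_set_def by simp
    moreover have "(\<lambda>x. c a *\<^sub>R f a x + (1 - c a) *\<^sub>R (\<Sum>v\<in>R. c' v *\<^sub>R f v x))
        = (\<lambda>x. \<Sum>v\<in>insert a R. c v *\<^sub>R f v x)"
      using insert pos by (auto simp: c'_def scaleR_sum_right)
    ultimately show ?thesis by simp
  qed
qed

lemma tau_lin:
  fixes M :: "'a measure"
  assumes "\<forall>i. finite_signed M (\<nu> i)" "finite R" "\<forall>v\<in>R. f v \<in> Mb M"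
  shows "tau \<nu> (\<lambda>x. \<Sum>v\<in>R. c v *\<^sub>R f v x) = (\<Sum>v\<in>R. c v * tau \<nu> (f v))"
proof -
  have I: "integrable N (\<lambda>x. f v x $ i)" if "v \<in> R" "finite_measure N" "sets N = sets M" for v i N
    using Mb_integrable assms that by blast
  have eq: "(\<integral>x. (\<Sum>v\<in>R. c v *\<^sub>R f v x) $ i \<partial>N) = (\<Sum>v\<in>R. c v * (\<integral>x. f v x $ i \<partial>N))"
    if "finite_measure N" "sets N = sets M" for N i
  proof -
    have "(\<integral>x. (\<Sum>v\<in>R. c v *\<^sub>R f v x) $ i \<partial>N) = (\<integral>x. (\<Sum>v\<in>R. c v * f v x $ i) \<partial>N)"
      by (simp add: sum_component)
    also have "\<dots> = (\<Sum>v\<in>R. (\<integral>x. c v * f v x $ i \<partial>N))"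
    proof (rule Bochner_Integration.integral_sum)
      fix v assume "v \<in> R"
      then show "integrable N (\<lambda>x. c v * f v x $ i)"
        using I[OF _ that] by (intro integrable_mult_right) blast
    qed
    also have "\<dots> = (\<Sum>v\<in>R. c v * (\<integral>x. f v x $ i \<partial>N))" by simp
    finally show ?thesis .
  qed
  have "tau \<nu> (\<lambda>x. \<Sum>v\<in>R. c v *\<^sub>R f v x) =
     (\<Sum>i\<in>UNIV. (\<Sum>v\<in>R. c v * (\<integral>x. f v x $ i \<partial>fst (\<nu> i))) - (\<Sum>v\<in>R. c v * (\<integral>x. f v x $ i \<partial>snd (\<nu> i))))"
    unfolding tau_def
  proof (rule sum.cong[OF refl])
    fix i
    have "finite_measure (fst (\<nu> i))" "sets (fst (\<nu> i)) = sets M"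
       "finite_measure (snd (\<nu> i))" "sets (snd (\<nu> i)) = sets M"
      using assms(1) unfolding finite_signed_def by auto
    then show "(\<integral>x. (\<Sum>v\<in>R. c v *\<^sub>R f v x) $ i \<partial>fst (\<nu> i)) - (\<integral>x. (\<Sum>v\<in>R. c v *\<^sub>R f v x) $ i \<partial>snd (\<nu> i)) =
      (\<Sum>v\<in>R. c v * (\<integral>x. f v x $ i \<partial>fst (\<nu> i))) - (\<Sum>v\<in>R. c v * (\<integral>x. f v x $ i \<partial>snd (\<nu> i)))"
      using eq by presburger
  qed
  also have "\<dots> = (\<Sum>i\<in>UNIV. \<Sum>v\<in>R. c v * ((\<integral>x. f v x $ i \<partial>fst (\<nu> i)) - (\<integral>x. f v x $ i \<partial>snd (\<nu> i))))"
    by (simp add: sum_subtractf right_diff_distrib)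
  also have "\<dots> = (\<Sum>v\<in>R. \<Sum>i\<in>UNIV. c v * ((\<integral>x. f v x $ i \<partial>fst (\<nu> i)) - (\<integral>x. f v x $ i \<partial>snd (\<nu> i))))"
    by (rule sum.swap)
  also have "\<dots> = (\<Sum>v\<in>R. c v * tau \<nu> (f v))"
    unfolding tau_def by (simp add: sum_distrib_left)
  finally show ?thesis .
qed

lemma fub_facts:
  fixes \<mu> :: "'g measure" and M :: "'a measure" and T :: "'g \<Rightarrow> 'a \<Rightarrow> 'a"
    and \<gamma> :: "'a \<Rightarrow> real ^ 'n::finite"
  assumes prob: "prob_space \<mu>"
    and Tm: "(\<lambda>(\<sigma>, x). T \<sigma> x) \<in> measurable (\<mu> \<Otimes>\<^sub>M M) M"
    and g: "\<gamma> \<in> Mb M"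
    and B: "\<And>x. x \<in> space M \<Longrightarrow> norm (\<gamma> x) \<le> B"
    and N: "finite_measure N" "sets N = sets M"
  shows "(\<lambda>\<sigma>. \<integral>x. \<gamma> (T \<sigma> x) $ i \<partial>N) \<in> borel_measurable \<mu>"
    and "\<And>\<sigma>. \<sigma> \<in> space \<mu> \<Longrightarrow> \<bar>\<integral>x. \<gamma> (T \<sigma> x) $ i \<partial>N\<bar> \<le> B * measure N (space N)"
    and "(\<integral>x. S_op \<mu> M T \<gamma> x $ i \<partial>N) = (\<integral>\<sigma>. (\<integral>x. \<gamma> (T \<sigma> x) $ i \<partial>N) \<partial>\<mu>)"
    and "\<And>\<sigma>. \<sigma> \<in> space \<mu> \<Longrightarrow> (\<integral>x. compose_action M T \<sigma> \<gamma> x $ i \<partial>N) = (\<integral>x. \<gamma> (T \<sigma> x) $ i \<partial>N)"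
proof -
  have sp: "space N = space M" using N(2) by (rule sets_eq_imp_space_eq)
  have gm: "\<gamma> \<in> borel_measurable M" using g by (simp add: Mb_def)
  have fmu: "finite_measure \<mu>" using prob by (simp add: prob_space_def)
  have Tm': "(\<lambda>(\<sigma>, x). T \<sigma> x) \<in> measurable (\<mu> \<Otimes>\<^sub>M N) M"
    using Tm measurable_cong_sets[OF sets_pair_measure_cong[OF refl[of "sets \<mu>"] N(2)] refl[of "sets M"]] by simp
  have J: "(\<lambda>(\<sigma>, x). \<gamma> (T \<sigma> x) $ i) \<in> borel_measurable (\<mu> \<Otimes>\<^sub>M N)"
    using measurable_compose[OF measurable_compose[OF Tm' gm] borel_measurable_nth[of i]]
    by (simp add: case_prod_unfold)
  have Tsp: "T \<sigma> x \<in> space M" if "\<sigma> \<in> space \<mu>" "x \<in> space M" for \<sigma> x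
    using measurable_space[OF Tm, of "(\<sigma>, x)"] that by (simp add: space_pair_measure)
  have Bi: "\<bar>\<gamma> (T \<sigma> x) $ i\<bar> \<le> B" if "\<sigma> \<in> space \<mu>" "x \<in> space M" for \<sigma> x
    using B[OF Tsp[OF that]] Finite_Cartesian_Product.norm_nth_le[of "\<gamma> (T \<sigma> x)" i] by simp
  have sfN: "sigma_finite_measure N" using N(1) by (rule finite_measure.sigma_finite_measure)
  show "(\<lambda>\<sigma>. \<integral>x. \<gamma> (T \<sigma> x) $ i \<partial>N) \<in> borel_measurable \<mu>"
    using sigma_finite_measure.borel_measurable_lebesgue_integral[OF sfN, of "\<lambda>\<sigma> x. \<gamma> (T \<sigma> x) $ i"] J
    by simp
  have secm: "(\<lambda>x. \<gamma> (T \<sigma> x) $ i) \<in> borel_measurable N" if "\<sigma> \<in> space \<mu>" for \<sigma>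
    using measurable_compose[OF measurable_Pair1'[OF that, of N] J] by simp
  show bd: "\<bar>\<integral>x. \<gamma> (T \<sigma> x) $ i \<partial>N\<bar> \<le> B * measure N (space N)" if "\<sigma> \<in> space \<mu>" for \<sigma>
    using int_abs_bound[OF N(1) secm[OF that], of B] Bi[OF that] sp by simp
  show "(\<integral>x. compose_action M T \<sigma> \<gamma> x $ i \<partial>N) = (\<integral>x. \<gamma> (T \<sigma> x) $ i \<partial>N)" if "\<sigma> \<in> space \<mu>" for \<sigma>
    by (rule Bochner_Integration.integral_cong) (auto simp: compose_action_def sp)
  have intv: "integrable \<mu> (\<lambda>\<sigma>. \<gamma> (T \<sigma> x))" if "x \<in> space M" for x
  proof (rule finite_measure.integrable_const_bound[OF fmu])
    show "AE \<sigma> in \<mu>. norm (\<gamma> (T \<sigma> x)) \<le> B" using B Tsp that by (intro AE_I2) blast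
    show "(\<lambda>\<sigma>. \<gamma> (T \<sigma> x)) \<in> borel_measurable \<mu>"
      using measurable_compose[OF measurable_compose[OF measurable_Pair2'[OF that, of \<mu>] Tm] gm] by simp
  qed
  have "(\<integral>x. S_op \<mu> M T \<gamma> x $ i \<partial>N) = (\<integral>x. (\<integral>\<sigma>. \<gamma> (T \<sigma> x) $ i \<partial>\<mu>) \<partial>N)"
  proof (rule Bochner_Integration.integral_cong[OF refl])
    fix x assume "x \<in> space N"
    then have x: "x \<in> space M" using sp by simp
    then show "S_op \<mu> M T \<gamma> x $ i = (\<integral>\<sigma>. \<gamma> (T \<sigma> x) $ i \<partial>\<mu>)"
      unfolding S_op_def using integral_bounded_linear[OF bounded_linear_vec_nth intv[OF x], of i]
      by simp
  qed
  also have "\<dots> = (\<integral>\<sigma>. (\<integral>x. \<gamma> (T \<sigma> x) $ i \<partial>N) \<partial>\<mu>)"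
  proof (rule pair_sigma_finite.Fubini_integral)
    show "pair_sigma_finite \<mu> N"
      by (intro pair_sigma_finite.intro prob_space_imp_sigma_finite prob sfN)
    show "integrable (\<mu> \<Otimes>\<^sub>M N) (\<lambda>(\<sigma>, x). \<gamma> (T \<sigma> x) $ i)"
    proof (rule finite_measure.integrable_const_bound[OF finite_measure_pair_measure[OF N(1) fmu]])
      show "AE p in \<mu> \<Otimes>\<^sub>M N. norm (case p of (\<sigma>, x) \<Rightarrow> \<gamma> (T \<sigma> x) $ i) \<le> B"
        using Bi sp by (intro AE_I2) (auto simp: space_pair_measure)
      show "(\<lambda>(\<sigma>, x). \<gamma> (T \<sigma> x) $ i) \<in> borel_measurable (\<mu> \<Otimes>\<^sub>M N)" by (rule J)
    qed
  qed
  finally show "(\<integral>x. S_op \<mu> M T \<gamma> x $ i \<partial>N) = (\<integral>\<sigma>. (\<integral>x. \<gamma> (T \<sigma> x) $ i \<partial>N) \<partial>\<mu>)" .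
qed

lemma floor_close:
  fixes a b d :: real assumes "d > 0" "\<lfloor>a / d\<rfloor> = \<lfloor>b / d\<rfloor>" shows "\<bar>a - b\<bar> < d"
proof -
  have 1: "a / d - 1 < real_of_int \<lfloor>a/d\<rfloor>" "b / d - 1 < real_of_int \<lfloor>b/d\<rfloor>"
    by (rule real_of_int_floor_gt_diff_one)+
  have 2: "real_of_int \<lfloor>a/d\<rfloor> \<le> a / d" "real_of_int \<lfloor>b/d\<rfloor> \<le> b / d"
    by (rule of_int_floor_le)+
  have 3: "real_of_int \<lfloor>a/d\<rfloor> = real_of_int \<lfloor>b/d\<rfloor>" using assms(2) by simp
  have "\<bar>a / d - b / d\<bar> < 1" using 1 2 3 by linarith
  then have "\<bar>(a - b) / d\<bar> < 1" by (simp only: diff_divide_distrib)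
  then have "\<bar>a - b\<bar> / d < 1" using assms(1) by (simp only: abs_divide abs_of_pos)
  then show ?thesis using assms(1) by (simp only: pos_divide_less_eq mult_1_left)
qed

lemma floor_set_meas:
  fixes f :: "'b \<Rightarrow> real"
  assumes "f \<in> borel_measurable N"
  shows "{x\<in>space N. \<lfloor>f x / d\<rfloor> = k} \<in> sets N"
proof -
  have fd: "(\<lambda>x. f x / d) \<in> borel_measurable N" using assms by (rule borel_measurable_divide) simp
  have "(\<lambda>x. \<lfloor>f x / d\<rfloor>) \<in> measurable N (count_space UNIV)"
    using measurable_compose[OF fd measurable_real_floor] by simp
  then have "(\<lambda>x. \<lfloor>f x / d\<rfloor>) -` {k} \<inter> space N \<in> sets N" by (rule measurable_sets) simp
  moreover have "(\<lambda>x. \<lfloor>f x / d\<rfloor>) -` {k} \<inter> space N = {x\<in>space N. \<lfloor>f x / d\<rfloor> = k}" by blast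
  ultimately show ?thesis by simp
qed

theorem lemma3:
  fixes tp :: "'g topology" and mul :: "'g \<Rightarrow> 'g \<Rightarrow> 'g" and e :: 'g and inver :: "'g \<Rightarrow> 'g"
    and \<mu> :: "'g measure" and M :: "'a measure" and T :: "'g \<Rightarrow> 'a \<Rightarrow> 'a"
    and V \<Gamma> :: "('a \<Rightarrow> real ^ 'n::finite) set"
  assumes "compact_hausdorff_group tp mul e inver"
    and "haar_probability tp mul \<mu>"
    and "measurable_group_action tp mul e \<mu> M T"
    and "V \<subseteq> Mb M" and "lin_subspace V"
    and "\<Gamma> \<subseteq> V"
    and "convex_fun_set \<Gamma>"
    and "closedin (MX_topology M V) \<Gamma>"
    and "\<forall>\<gamma>\<in>V. S_op \<mu> M T \<gamma> \<in> V"
    and "\<forall>\<gamma>\<in>\<Gamma>. \<forall>\<sigma>\<in>topspace tp. compose_action M T \<sigma> \<gamma> \<in> \<Gamma>"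
  shows "\<forall>\<gamma>\<in>\<Gamma>. S_op \<mu> M T \<gamma> \<in> \<Gamma>"
proof
  fix \<gamma> assume gG: "\<gamma> \<in> \<Gamma>"
  have gV: "\<gamma> \<in> V" using assms(6) gG by blast
  have gMb: "\<gamma> \<in> Mb M" using assms(4) gV by blast
  have pV: "S_op \<mu> M T \<gamma> \<in> V" using assms(9) gV by blast
  have prob: "prob_space \<mu>" and spmu: "space \<mu> = topspace tp"
    using assms(2) unfolding haar_probability_def by auto
  have fmu: "finite_measure \<mu>" using prob by (simp add: prob_space_def)
  have mu1: "measure \<mu> (space \<mu>) = 1" using prob by (simp add: prob_space.prob_space)
  have Tm: "(\<lambda>(\<sigma>, x). T \<sigma> x) \<in> measurable (\<mu> \<Otimes>\<^sub>M M) M"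
    using assms(3) unfolding measurable_group_action_def by auto
  obtain B where B0: "B \<ge> 0" and B: "\<And>x. x \<in> space M \<Longrightarrow> norm (\<gamma> x) \<le> B"
    using Mb_bound[OF gMb] by blast
  have compG: "compose_action M T \<sigma> \<gamma> \<in> \<Gamma>" if "\<sigma> \<in> space \<mu>" for \<sigma>
    using assms(10) gG that spmu by auto
  have compMb: "compose_action M T \<sigma> \<gamma> \<in> Mb M" if "\<sigma> \<in> space \<mu>" for \<sigma>
    using compG[OF that] assms(4,6) by blast
  define G where "G N i \<sigma> = (\<integral>x. \<gamma> (T \<sigma> x) $ i \<partial>N)" for N i \<sigma>
  define g where "g \<nu> \<sigma> = (\<Sum>i\<in>UNIV. G (fst (\<nu> i)) i \<sigma> - G (snd (\<nu> i)) i \<sigma>)" for \<nu> \<sigma>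
  have FS: "finite_measure (fst (\<nu> i))" "sets (fst (\<nu> i)) = sets M"
     "finite_measure (snd (\<nu> i))" "sets (snd (\<nu> i)) = sets M"
    if "\<forall>i. finite_signed M (\<nu> i)" for \<nu> i
    using that unfolding finite_signed_def by auto
  have Gm: "G N i \<in> borel_measurable \<mu>" if "finite_measure N" "sets N = sets M" for N i
    unfolding G_def by (rule fub_facts(1)[OF prob Tm gMb B that])
  have Gb: "\<bar>G N i \<sigma>\<bar> \<le> B * measure N (space N)" if "finite_measure N" "sets N = sets M" "\<sigma> \<in> space \<mu>" for N i \<sigma>
    unfolding G_def by (rule fub_facts(2)[OF prob Tm gMb B that(1,2) that(3)])
  have Gi: "integrable \<mu> (G N i)" if "finite_measure N" "sets N = sets M" for N i
  proof (rule finite_measure.integrable_const_bound[OF fmu])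
    show "AE \<sigma> in \<mu>. norm (G N i \<sigma>) \<le> B * measure N (space N)" using Gb[OF that] by (intro AE_I2) simp
    show "G N i \<in> borel_measurable \<mu>" by (rule Gm[OF that])
  qed
  have gmeas: "g \<nu> \<in> borel_measurable \<mu>" if "\<forall>i. finite_signed M (\<nu> i)" for \<nu>
  proof -
    have "(\<lambda>\<sigma>. \<Sum>i\<in>UNIV. G (fst (\<nu> i)) i \<sigma> - G (snd (\<nu> i)) i \<sigma>) \<in> borel_measurable \<mu>"
      using Gm FS[OF that] by (intro borel_measurable_sum borel_measurable_diff) auto
    then show ?thesis unfolding g_def[abs_def] by simp
  qed
  have gbound: "\<exists>C. \<forall>\<sigma>\<in>space \<mu>. \<bar>g \<nu> \<sigma>\<bar> \<le> C" if fs: "\<forall>i. finite_signed M (\<nu> i)" for \<nu>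
  proof (intro exI ballI)
    fix \<sigma> assume s: "\<sigma> \<in> space \<mu>"
    have "\<bar>g \<nu> \<sigma>\<bar> \<le> (\<Sum>i\<in>UNIV. \<bar>G (fst (\<nu> i)) i \<sigma> - G (snd (\<nu> i)) i \<sigma>\<bar>)"
      unfolding g_def by (rule sum_abs)
    also have "\<dots> \<le> (\<Sum>i\<in>UNIV. B * measure (fst (\<nu> i)) (space (fst (\<nu> i))) + B * measure (snd (\<nu> i)) (space (snd (\<nu> i))))"
    proof (rule sum_mono)
      fix i
      have "\<bar>G (fst (\<nu> i)) i \<sigma>\<bar> \<le> B * measure (fst (\<nu> i)) (space (fst (\<nu> i)))"
        using Gb[OF FS(1,2)[OF fs] s] .
      moreover have "\<bar>G (snd (\<nu> i)) i \<sigma>\<bar> \<le> B * measure (snd (\<nu> i)) (space (snd (\<nu> i)))"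
        using Gb[OF FS(3,4)[OF fs] s] .
      ultimately show "\<bar>G (fst (\<nu> i)) i \<sigma> - G (snd (\<nu> i)) i \<sigma>\<bar> \<le> B * measure (fst (\<nu> i)) (space (fst (\<nu> i))) + B * measure (snd (\<nu> i)) (space (snd (\<nu> i)))"
        by linarith
    qed
    finally show "\<bar>g \<nu> \<sigma>\<bar> \<le> (\<Sum>i\<in>UNIV. B * measure (fst (\<nu> i)) (space (fst (\<nu> i))) + B * measure (snd (\<nu> i)) (space (snd (\<nu> i))))" .
  qed
  have gcomp: "tau \<nu> (compose_action M T \<sigma> \<gamma>) = g \<nu> \<sigma>" if fs: "\<forall>i. finite_signed M (\<nu> i)" and s: "\<sigma> \<in> space \<mu>" for \<nu> \<sigma>
    unfolding tau_def g_def G_def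
    using fub_facts(4)[OF prob Tm gMb B FS(1,2)[OF fs] s] fub_facts(4)[OF prob Tm gMb B FS(3,4)[OF fs] s]
    by simp
  have gint: "tau \<nu> (S_op \<mu> M T \<gamma>) = (\<integral>\<sigma>. g \<nu> \<sigma> \<partial>\<mu>)" if fs: "\<forall>i. finite_signed M (\<nu> i)" for \<nu>
  proof -
    have "tau \<nu> (S_op \<mu> M T \<gamma>) = (\<Sum>i\<in>UNIV. (\<integral>\<sigma>. G (fst (\<nu> i)) i \<sigma> \<partial>\<mu>) - (\<integral>\<sigma>. G (snd (\<nu> i)) i \<sigma> \<partial>\<mu>))"
      unfolding tau_def G_def
      using fub_facts(3)[OF prob Tm gMb B FS(1,2)[OF fs]] fub_facts(3)[OF prob Tm gMb B FS(3,4)[OF fs]]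
      by simp
    also have "\<dots> = (\<Sum>i\<in>UNIV. (\<integral>\<sigma>. G (fst (\<nu> i)) i \<sigma> - G (snd (\<nu> i)) i \<sigma> \<partial>\<mu>))"
      using Gi FS[OF fs] by (intro sum.cong refl integral_diff[symmetric]) auto
    also have "\<dots> = (\<integral>\<sigma>. g \<nu> \<sigma> \<partial>\<mu>)"
      unfolding g_def
      by (rule Bochner_Integration.integral_sum[symmetric]) (use Gi FS[OF fs] in auto)
    finally show ?thesis .
  qed
  show "S_op \<mu> M T \<gamma> \<in> \<Gamma>"
  proof (rule ccontr)
    assume pn: "S_op \<mu> M T \<gamma> \<notin> \<Gamma>"
    define p where "p = S_op \<mu> M T \<gamma>"
    let ?S = "{{\<gamma>\<in>V. tau \<nu> \<gamma> \<in> U} | \<nu> U. (\<forall>i. finite_signed M (\<nu> i)) \<and> open U}"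
    have "\<Union>?S = V"
    proof
      show "\<Union>?S \<subseteq> V" by blast
      have "finite_measure (null_measure M)" by (rule finite_measureI) simp
      then have "\<forall>i. finite_signed M ((\<lambda>i::'n. (null_measure M, null_measure M)) i)"
        unfolding finite_signed_def by simp
      then have "{\<gamma>\<in>V. tau (\<lambda>i::'n. (null_measure M, null_measure M)) \<gamma> \<in> UNIV} \<in> ?S" by blast
      then show "V \<subseteq> \<Union>?S" by blast
    qed
    then have top: "topspace (MX_topology M V) = V"
      unfolding MX_topology_def topology_generated_by_topspace by simp
    have "openin (MX_topology M V) (V - \<Gamma>)" using assms(8) top by (simp add: closedin_def)
    then have gen: "generate_topology_on ?S (V - \<Gamma>)"
      unfolding MX_topology_def by (rule openin_topology_generated_by)
    have pVG: "p \<in> V - \<Gamma>" using pV pn p_def by simp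
    obtain F \<epsilon> where "finite F \<and> (\<forall>\<nu>\<in>F. \<forall>i. finite_signed M (\<nu> i)) \<and> \<epsilon> > 0 \<and>
           (\<forall>f\<in>V. (\<forall>\<nu>\<in>F. \<bar>tau \<nu> f - tau \<nu> p\<bar> < \<epsilon>) \<longrightarrow> f \<in> V - \<Gamma>)"
      using bspec[OF nbhd[OF gen] pVG] by (elim exE) (erule that)
    then have F: "finite F" "\<And>\<nu>. \<nu> \<in> F \<Longrightarrow> \<forall>i. finite_signed M (\<nu> i)" "\<epsilon> > 0"
      and nb: "\<And>f. f \<in> V \<Longrightarrow> (\<forall>\<nu>\<in>F. \<bar>tau \<nu> f - tau \<nu> p\<bar> < \<epsilon>) \<Longrightarrow> f \<in> V - \<Gamma>" by auto
    define \<delta> where "\<delta> = \<epsilon> / 2"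
    have d0: "\<delta> > 0" using F(3) by (simp add: \<delta>_def)
    have "\<forall>\<nu>\<in>F. \<exists>C. \<forall>\<sigma>\<in>space \<mu>. \<bar>g \<nu> \<sigma>\<bar> \<le> C" using gbound F(2) by blast
    then obtain K where K: "\<And>\<nu> \<sigma>. \<nu> \<in> F \<Longrightarrow> \<sigma> \<in> space \<mu> \<Longrightarrow> \<bar>g \<nu> \<sigma>\<bar> \<le> K \<nu>"
      by metis
    define h where "h \<sigma> = (\<lambda>\<nu>\<in>F. \<lfloor>g \<nu> \<sigma> / \<delta>\<rfloor>)" for \<sigma>
    define Rg where "Rg = h ` space \<mu>"
    have "Rg \<subseteq> PiE F (\<lambda>\<nu>. {\<lfloor>- K \<nu> / \<delta>\<rfloor> .. \<lfloor>K \<nu> / \<delta>\<rfloor>})"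
    proof
      fix v assume "v \<in> Rg"
      then obtain \<sigma> where s: "\<sigma> \<in> space \<mu>" "v = h \<sigma>" unfolding Rg_def by blast
      have "\<lfloor>- K \<nu> / \<delta>\<rfloor> \<le> \<lfloor>g \<nu> \<sigma> / \<delta>\<rfloor> \<and> \<lfloor>g \<nu> \<sigma> / \<delta>\<rfloor> \<le> \<lfloor>K \<nu> / \<delta>\<rfloor>" if "\<nu> \<in> F" for \<nu>
      proof -
        have "- K \<nu> \<le> g \<nu> \<sigma>" "g \<nu> \<sigma> \<le> K \<nu>" using K[OF that s(1)] by linarith+
        then have "- K \<nu> / \<delta> \<le> g \<nu> \<sigma> / \<delta>" "g \<nu> \<sigma> / \<delta> \<le> K \<nu> / \<delta>"
          using d0 by (intro divide_right_mono; simp)+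
        then show ?thesis by (intro conjI floor_mono)
      qed
      then show "v \<in> PiE F (\<lambda>\<nu>. {\<lfloor>- K \<nu> / \<delta>\<rfloor> .. \<lfloor>K \<nu> / \<delta>\<rfloor>})"
        using s unfolding h_def by auto
    qed
    then have finR: "finite Rg" by (rule finite_subset) (intro finite_PiE F(1) finite_atLeastAtMost_int)
    define A where "A v = {\<sigma>\<in>space \<mu>. h \<sigma> = v}" for v
    have Aeq: "A v = {\<sigma>\<in>space \<mu>. \<forall>\<nu>\<in>F. \<lfloor>g \<nu> \<sigma> / \<delta>\<rfloor> = v \<nu>}" if "v \<in> Rg" for v
    proof -
      have ext: "v \<in> extensional F" using that unfolding Rg_def h_def by auto
      show ?thesis unfolding A_def h_def
        using ext by (auto simp: fun_eq_iff extensional_def restrict_def)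
    qed
    have Asets: "A v \<in> sets \<mu>" if "v \<in> Rg" for v
      unfolding Aeq[OF that]
      by (rule sets.sets_Collect_finite_All) (use floor_set_meas gmeas F(2) F(1) in auto)
    have Adisj: "disjoint_family_on A Rg" unfolding disjoint_family_on_def A_def by auto
    have Aun: "(\<Union>v\<in>Rg. A v) = space \<mu>" unfolding A_def Rg_def by auto
    define c where "c v = measure \<mu> (A v)" for v
    have c0: "\<forall>v\<in>Rg. c v \<ge> 0" unfolding c_def by simp
    have c1: "sum c Rg = 1"
      using finite_measure.finite_measure_finite_Union[OF fmu finR, of A] Asets Adisj Aun mu1
      unfolding c_def by auto
    define r where "r v = (SOME \<sigma>. \<sigma> \<in> A v)" for v
    have rA: "r v \<in> A v" if vR: "v \<in> Rg" for v
    proof -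
      obtain \<sigma> where "\<sigma> \<in> space \<mu>" "v = h \<sigma>" using vR unfolding Rg_def by blast
      then have "\<sigma> \<in> A v" unfolding A_def by simp
      then show ?thesis unfolding r_def by (rule someI)
    qed
    have rs: "r v \<in> space \<mu>" if "v \<in> Rg" for v using rA[OF that] unfolding A_def by simp
    define q where "q = (\<lambda>x. \<Sum>v\<in>Rg. c v *\<^sub>R compose_action M T (r v) \<gamma> x)"
    have qG: "q \<in> \<Gamma>" unfolding q_def
    proof (rule convex_comb[OF assms(7) finR c0 c1])
      show "\<forall>v\<in>Rg. compose_action M T (r v) \<gamma> \<in> \<Gamma>" using compG rs by blast
    qed
    then have qV: "q \<in> V" using assms(6) by blast
    have delta: "(\<Sum>v\<in>Rg. indicator (A v) \<sigma> * \<phi> v) = \<phi> (h \<sigma>)" if "\<sigma> \<in> space \<mu>" for \<sigma> and \<phi> :: "_ \<Rightarrow> real"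
    proof -
      have "(\<Sum>v\<in>Rg. indicator (A v) \<sigma> * \<phi> v) = (\<Sum>v\<in>Rg. if h \<sigma> = v then \<phi> v else 0)"
        using that by (intro sum.cong refl) (auto simp: A_def indicator_def)
      also have "\<dots> = \<phi> (h \<sigma>)" using finR that unfolding Rg_def by simp
      finally show ?thesis .
    qed
    have close: "\<bar>tau \<nu> q - tau \<nu> p\<bar> < \<epsilon>" if nF: "\<nu> \<in> F" for \<nu>
    proof -
      have fs: "\<forall>i. finite_signed M (\<nu> i)" using F(2)[OF nF] .
      have "tau \<nu> q = (\<Sum>v\<in>Rg. c v * tau \<nu> (compose_action M T (r v) \<gamma>))"
        unfolding q_def by (rule tau_lin[OF fs finR]) (use compMb rs in blast)
      also have "\<dots> = (\<Sum>v\<in>Rg. c v * g \<nu> (r v))"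
        by (rule sum.cong[OF refl]) (simp add: gcomp[OF fs rs])
      also have "\<dots> = (\<integral>\<sigma>. (\<Sum>v\<in>Rg. indicator (A v) \<sigma> * g \<nu> (r v)) \<partial>\<mu>)"
      proof -
        have "(\<integral>\<sigma>. (\<Sum>v\<in>Rg. indicator (A v) \<sigma> * g \<nu> (r v)) \<partial>\<mu>) = (\<Sum>v\<in>Rg. (\<integral>\<sigma>. indicator (A v) \<sigma> * g \<nu> (r v) \<partial>\<mu>))"
        proof (rule Bochner_Integration.integral_sum)
          fix v assume "v \<in> Rg"
          then show "integrable \<mu> (\<lambda>\<sigma>. indicator (A v) \<sigma> * g \<nu> (r v))"
            using Asets finite_measure.emeasure_finite[OF fmu] 
            by (intro integrable_mult_left integrable_real_indicator) (auto simp: less_top)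
        qed
        also have "\<dots> = (\<Sum>v\<in>Rg. c v * g \<nu> (r v))"
          using Asets sets.sets_into_space unfolding c_def
          by (intro sum.cong refl) (auto simp: Int_absorb2)
        finally show ?thesis by simp
      qed
      finally have tq: "tau \<nu> q = (\<integral>\<sigma>. (\<Sum>v\<in>Rg. indicator (A v) \<sigma> * g \<nu> (r v)) \<partial>\<mu>)" .
      have tp: "tau \<nu> p = (\<integral>\<sigma>. g \<nu> \<sigma> \<partial>\<mu>)" unfolding p_def by (rule gint[OF fs])
      have m1: "(\<lambda>\<sigma>. \<Sum>v\<in>Rg. indicator (A v) \<sigma> * g \<nu> (r v)) \<in> borel_measurable \<mu>"
        using Asets by (intro borel_measurable_sum borel_measurable_times borel_measurable_indicator borel_measurable_const) auto
      have m2: "g \<nu> \<in> borel_measurable \<mu>" by (rule gmeas[OF fs])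
      obtain C where C: "\<forall>\<sigma>\<in>space \<mu>. \<bar>g \<nu> \<sigma>\<bar> \<le> C" using gbound[OF fs] by blast
      have i2: "integrable \<mu> (g \<nu>)"
        by (rule finite_measure.integrable_const_bound[OF fmu _ m2, of C]) (use C in \<open>auto intro!: AE_I2\<close>)
      have ptw: "\<bar>(\<Sum>v\<in>Rg. indicator (A v) \<sigma> * g \<nu> (r v)) - g \<nu> \<sigma>\<bar> \<le> \<delta>" if s: "\<sigma> \<in> space \<mu>" for \<sigma>
      proof -
        have hR: "h \<sigma> \<in> Rg" using s unfolding Rg_def by simp
        have "h (r (h \<sigma>)) = h \<sigma>" using rA[OF hR] unfolding A_def by simp
        then have "h (r (h \<sigma>)) \<nu> = h \<sigma> \<nu>" by simp
        then have "\<lfloor>g \<nu> (r (h \<sigma>)) / \<delta>\<rfloor> = \<lfloor>g \<nu> \<sigma> / \<delta>\<rfloor>"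
          unfolding h_def using nF by simp
        then have "\<bar>g \<nu> (r (h \<sigma>)) - g \<nu> \<sigma>\<bar> < \<delta>" by (rule floor_close[OF d0])
        then show ?thesis using delta[OF s, of "\<lambda>v. g \<nu> (r v)"] by simp
      qed
      have "\<bar>tau \<nu> q - tau \<nu> p\<bar> = \<bar>\<integral>\<sigma>. (\<Sum>v\<in>Rg. indicator (A v) \<sigma> * g \<nu> (r v)) - g \<nu> \<sigma> \<partial>\<mu>\<bar>"
      proof -
        have i1: "integrable \<mu> (\<lambda>\<sigma>. \<Sum>v\<in>Rg. indicator (A v) \<sigma> * g \<nu> (r v))"
        proof (rule finite_measure.integrable_const_bound[OF fmu _ m1, of "C + \<delta>"])
          show "AE \<sigma> in \<mu>. norm (\<Sum>v\<in>Rg. indicator (A v) \<sigma> * g \<nu> (r v)) \<le> C + \<delta>"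
          proof (rule AE_I2)
            fix \<sigma> assume s: "\<sigma> \<in> space \<mu>"
            show "norm (\<Sum>v\<in>Rg. indicator (A v) \<sigma> * g \<nu> (r v)) \<le> C + \<delta>"
            proof -
              have a: "\<bar>(\<Sum>v\<in>Rg. indicator (A v) \<sigma> * g \<nu> (r v)) - g \<nu> \<sigma>\<bar> \<le> \<delta>" by (rule ptw[OF s])
              have b: "\<bar>g \<nu> \<sigma>\<bar> \<le> C" using C s by blast
              show ?thesis unfolding real_norm_def using a b by arith
            qed
          qed
        qed
        show ?thesis unfolding tq tp using i1 i2 by simp
      qed
      also have "\<dots> \<le> \<delta> * measure \<mu> (space \<mu>)"
        using m1 m2 ptw by (intro int_abs_bound[OF fmu]) auto
      also have "\<dots> < \<epsilon>" using mu1 d0 unfolding \<delta>_def by simp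
      finally show ?thesis .
    qed
    have "q \<in> V - \<Gamma>" using nb[OF qV] close by blast
    then show False using qG by blast
  qed
qed

end
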